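(* Let $R$ be a ring, $M$ an $R$-module and $\theta$ an infinite cardinal. Then $\mathrm{Aff}_2\subseteq\mathrm{Aff}_1$.
   Context: All formulas are from $\mathscr{L}_{\infty,\theta}(\tau_M)$ with fewer than $\theta$ free variables. For $\varphi(\bar x,\bar y)$ and $\bar a\in{}^{\lg(\bar y)}M$, $\varphi(M,\bar a)=\{\bar c: M\models\varphi[\bar c,\bar a]\}$. $\mathrm{Aff}_1$ is the set of formulas $\varphi(\bar x)$ with $\lg(\bar x)<\theta$ such that $\varphi(M)$ is closed under $(\bar a,\bar b,\bar c)\mapsto\bar a-\bar b+\bar c$ (coordinatewise). For an ordinal $\alpha_*$, formulas $\varphi(\bar x,\bar y)$ and $\bar\psi=\langle\psi_\alpha(\bar x,\bar y):\alpha<\alpha_*\rangle$, and $\bar b\in{}^{\lg\bar x}M$, $\bar a\in{}^{\lg\bar y}M$, let $\mathrm{set}_{\bar\psi}(\bar b,\bar a)=\{\alpha<\alpha_*:\bar b^\frown\bar a\in\psi_\alpha(M)\}$; $\mathrm{Set}_{\varphi,\bar\psi}(\bar a)=\{\mathrm{set}_{\bar\psi}(\bar c,\bar a):\bar c\in\varphi(M,\bar a)\}$; and $\mathrm{inter}_{\varphi,\bar\psi}(\bar a)$ is the set of pairs $(w_0,w_1)$ with $w_0\subseteq w_1\subseteq\alpha_*$ such that there are $u_0,u_1\in\mathrm{Set}_{\varphi,\bar\psi}(\bar a)$ with $w_1\subseteq u_1$ and $u_0\cap w_1=w_0$. $\mathrm{Aff}_2$ is the smallest class of formulas containing the atomic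 formulas and closed under: (a) arbitrary conjunctions; (b) existential quantification $\exists\bar x$; (c) if $\varphi(\bar x,\bar y)$ and $\psi_\alpha(\bar x,\bar y)$ ($\alpha<\alpha_*$) are in $\mathrm{Aff}_2$ with $\psi_\alpha(M)\subseteq\varphi(M)$ for all $\alpha<\alpha_*$, and $\Upsilon\subseteq\{(w_0,w_1):w_0\subseteq w_1\subseteq\alpha_*\}$, then the formula $\vartheta(\bar y)=\Theta_{\varphi,\bar\psi,\Upsilon}(\bar y)$ is in $\mathrm{Aff}_2$, where $M\models\vartheta[\bar a]$ iff $\Upsilon\subseteq\mathrm{inter}_{\varphi,\bar\psi}(\bar a)$. *)

theory Defs
  imports Main
begin

definition left_module :: "('r::ring_1 \<Rightarrow> 'm::ab_group_add \<Rightarrow> 'm) \<Rightarrow> bool" where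
  "left_module sc \<longleftrightarrow>
     (\<forall>r x y. sc r (x + y) = sc r x + sc r y) \<and>
     (\<forall>r s x. sc (r + s) x = sc r x + sc s x) \<and>
     (\<forall>r s x. sc (r * s) x = sc r (sc s x)) \<and>
     (\<forall>x. sc 1 x = x)"

text \<open>Cardinal comparison: |X| < theta, where theta = |Th|.\<close>
definition less_card :: "'v set \<Rightarrow> 'c set \<Rightarrow> bool" where
  "less_card X Th \<longleftrightarrow> (card_of X, card_of Th) \<in> ordLess"

datatype ('v, 'r) tm = Var 'v | Zero | Add "('v, 'r) tm" "('v, 'r) tm"
  | Neg "('v, 'r) tm" | Sc 'r "('v, 'r) tm"

fun teval :: "('r \<Rightarrow> 'm::ab_group_add \<Rightarrow> 'm) \<Rightarrow> ('v \<Rightarrow> 'm) \<Rightarrow> ('v, 'r) tm \<Rightarrow> 'm" where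
  "teval sc v (Var i) = v i"
| "teval sc v Zero = 0"
| "teval sc v (Add s t) = teval sc v s + teval sc v t"
| "teval sc v (Neg t) = - teval sc v t"
| "teval sc v (Sc r t) = sc r (teval sc v t)"

text \<open>Formulas are represented semantically by the set of assignments (variables 'v to M)
  satisfying them.  A formula "has its free variables among Y" is rendered as
  the satisfaction set depending only on the variables in Y.\<close>
definition depends_on :: "('v \<Rightarrow> 'm) set \<Rightarrow> 'v set \<Rightarrow> bool" where
  "depends_on S Y \<longleftrightarrow> (\<forall>v w. (\<forall>i\<in>Y. v i = w i) \<longrightarrow> (v \<in> S \<longleftrightarrow> w \<in> S))"

definition ex_vars :: "'v set \<Rightarrow> ('v \<Rightarrow> 'm) set \<Rightarrow> ('v \<Rightarrow> 'm) set" where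
  "ex_vars X S = {v. \<exists>w\<in>S. \<forall>i. i \<notin> X \<longrightarrow> w i = v i}"

definition set_psi :: "('k \<Rightarrow> ('v \<Rightarrow> 'm) set) \<Rightarrow> 'k set \<Rightarrow> ('v \<Rightarrow> 'm) \<Rightarrow> 'k set" where
  "set_psi \<psi> I c = {\<alpha>\<in>I. c \<in> \<psi> \<alpha>}"

text \<open>Set_{phi,psi}(a): the x-variables are X; the assignment v gives the parameters a.\<close>
definition Set_phi_psi :: "('v \<Rightarrow> 'm) set \<Rightarrow> ('k \<Rightarrow> ('v \<Rightarrow> 'm) set) \<Rightarrow> 'k set \<Rightarrow> 'v set
    \<Rightarrow> ('v \<Rightarrow> 'm) \<Rightarrow> 'k set set" where
  "Set_phi_psi \<phi> \<psi> I X v = {set_psi \<psi> I c | c. c \<in> \<phi> \<and> (\<forall>i. i \<notin> X \<longrightarrow> c i = v i)}"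

definition inter_phi_psi :: "('v \<Rightarrow> 'm) set \<Rightarrow> ('k \<Rightarrow> ('v \<Rightarrow> 'm) set) \<Rightarrow> 'k set \<Rightarrow> 'v set
    \<Rightarrow> ('v \<Rightarrow> 'm) \<Rightarrow> ('k set \<times> 'k set) set" where
  "inter_phi_psi \<phi> \<psi> I X v = {(w0, w1). w0 \<subseteq> w1 \<and> w1 \<subseteq> I \<and>
      (\<exists>u0 \<in> Set_phi_psi \<phi> \<psi> I X v. \<exists>u1 \<in> Set_phi_psi \<phi> \<psi> I X v. w1 \<subseteq> u1 \<and> u0 \<inter> w1 = w0)}"

definition Theta :: "('v \<Rightarrow> 'm) set \<Rightarrow> ('k \<Rightarrow> ('v \<Rightarrow> 'm) set) \<Rightarrow> 'k set \<Rightarrow> 'v set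
    \<Rightarrow> ('k set \<times> 'k set) set \<Rightarrow> ('v \<Rightarrow> 'm) set" where
  "Theta \<phi> \<psi> I X Ups = {v. Ups \<subseteq> inter_phi_psi \<phi> \<psi> I X v}"

text \<open>Aff_2 (semantic rendering; the index sets of the families psi are subsets of the type 'k,
  which is universally quantified in the theorem).\<close>
inductive aff2 :: "'c set \<Rightarrow> ('r \<Rightarrow> 'm::ab_group_add \<Rightarrow> 'm) \<Rightarrow> 'k itself \<Rightarrow> ('v \<Rightarrow> 'm) set \<Rightarrow> bool"
  for Th :: "'c set" and sc :: "'r \<Rightarrow> 'm \<Rightarrow> 'm" and kt :: "'k itself" where
  atomic: "aff2 Th sc kt {v. teval sc v t1 = teval sc v t2}"
| conj: "\<lbrakk>\<forall>S\<in>F. aff2 Th sc kt S; less_card Y Th; \<forall>S\<in>F. depends_on S Y\<rbrakk>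
          \<Longrightarrow> aff2 Th sc kt (\<Inter>F)"
| ex: "\<lbrakk>aff2 Th sc kt S; less_card X Th\<rbrakk> \<Longrightarrow> aff2 Th sc kt (ex_vars X S)"
| theta: "\<lbrakk>aff2 Th sc kt \<phi>; \<forall>\<alpha>\<in>I. aff2 Th sc kt (\<psi> \<alpha>); \<forall>\<alpha>\<in>I. \<psi> \<alpha> \<subseteq> \<phi>;
           less_card X Th; less_card Y Th; X \<inter> Y = {};
           depends_on \<phi> (X \<union> Y); \<forall>\<alpha>\<in>I. depends_on (\<psi> \<alpha>) (X \<union> Y);
           Ups \<subseteq> {(w0, w1). w0 \<subseteq> w1 \<and> w1 \<subseteq> I}\<rbrakk>
          \<Longrightarrow> aff2 Th sc kt (Theta \<phi> (\<psi> :: 'k \<Rightarrow> ('v \<Rightarrow> 'm) set) I X Ups)"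

definition aff1 :: "'c set \<Rightarrow> ('v \<Rightarrow> 'm::ab_group_add) set \<Rightarrow> bool" where
  "aff1 Th S \<longleftrightarrow> (\<exists>Y. less_card Y Th \<and> depends_on S Y) \<and>
     (\<forall>a\<in>S. \<forall>b\<in>S. \<forall>c\<in>S. (\<lambda>i. a i - b i + c i) \<in> S)"

end

theory Submission
  imports Defs
begin

primrec tvars :: "('v, 'r) tm \<Rightarrow> 'v set" where
  "tvars (Var i) = {i}"
| "tvars Zero = {}"
| "tvars (Add s t) = tvars s \<union> tvars t"
| "tvars (Neg t) = tvars t"
| "tvars (Sc r t) = tvars t"

lemma finite_tvars: "finite (tvars t)"
  by (induct t) auto

lemma teval_dep: "(\<forall>i\<in>tvars t. v i = w i) \<Longrightarrow> teval sc v t = teval sc w t"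
  by (induct t) auto

lemma sc_diff:
  assumes "left_module sc" shows "sc r (x - y) = sc r x - sc r y"
proof -
  have "sc r ((x - y) + y) = sc r (x - y) + sc r y"
    using assms unfolding left_module_def by blast
  then show ?thesis by (simp add: algebra_simps)
qed

lemma sc_add:
  assumes "left_module sc" shows "sc r (x + y) = sc r x + sc r y"
  using assms unfolding left_module_def by blast

lemma teval_aff0:
  assumes "left_module sc" "\<forall>i. e i = a i - b i + c i"
  shows "teval sc e t = teval sc a t - teval sc b t + teval sc c t"
proof (induct t)
  case (Var x)
  then show ?case using assms(2) by simp
next
  case (Sc r t)
  then show ?case by (simp add: sc_diff[OF assms(1)] sc_add[OF assms(1)])
qed (simp_all add: algebra_simps sc_diff[OF assms(1)] sc_add[OF assms(1)])

lemma teval_aff: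
  assumes "left_module sc"
  shows "teval sc (\<lambda>i. a i - b i + c i) t = teval sc a t - teval sc b t + teval sc c t"
  by (rule teval_aff0[OF assms]) simp

lemma finite_less_card:
  assumes "finite (X :: 'v set)" "infinite (Th :: 'c set)"
  shows "less_card X Th"
  unfolding less_card_def
  by (rule finite_ordLess_infinite)
     (simp_all add: card_of_well_order_on Field_card_of assms)

lemma main:
  fixes Th :: "'c set" and sc :: "'r::ring_1 \<Rightarrow> 'm::ab_group_add \<Rightarrow> 'm"
    and S :: "('v \<Rightarrow> 'm) set" and kt :: "'k itself"
  assumes "aff2 Th sc kt S" "left_module sc" "infinite Th"
  shows "aff1 Th S"
  using assms(1)
proof (induct rule: aff2.induct)
  case (atomic t1 t2)
  have "depends_on {v. teval sc v t1 = teval sc v t2} (tvars t1 \<union> tvars t2)"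
    unfolding depends_on_def
  proof (intro allI impI)
    fix v w :: "'v \<Rightarrow> 'm" assume h: "\<forall>i\<in>tvars t1 \<union> tvars t2. v i = w i"
    have "teval sc v t1 = teval sc w t1" by (rule teval_dep) (use h in blast)
    moreover have "teval sc v t2 = teval sc w t2" by (rule teval_dep) (use h in blast)
    ultimately show "(v \<in> {v. teval sc v t1 = teval sc v t2}) = (w \<in> {v. teval sc v t1 = teval sc v t2})"
      by simp
  qed
  moreover have "less_card (tvars t1 \<union> tvars t2) Th"
    by (rule finite_less_card) (simp_all add: finite_tvars assms(3))
  moreover have "\<forall>a\<in>{v. teval sc v t1 = teval sc v t2}. \<forall>b\<in>{v. teval sc v t1 = teval sc v t2}.
     \<forall>c\<in>{v. teval sc v t1 = teval sc v t2}. (\<lambda>i. a i - b i + c i) \<in> {v. teval sc v t1 = teval sc v t2}"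
    by (simp add: teval_aff[OF assms(2)])
  ultimately show ?case unfolding aff1_def by (intro conjI exI[of _ "tvars t1 \<union> tvars t2"]) simp_all
next
  case (conj F Y)
  have "depends_on (\<Inter>F) Y"
    using conj(3) unfolding depends_on_def by blast
  moreover have "\<forall>a\<in>\<Inter>F. \<forall>b\<in>\<Inter>F. \<forall>c\<in>\<Inter>F. (\<lambda>i. a i - b i + c i) \<in> \<Inter>F"
    using conj(1) unfolding aff1_def by blast
  ultimately show ?case using conj(2) unfolding aff1_def by blast
next
  case (ex S X)
  then obtain Y where Y: "less_card Y Th" "depends_on S Y"
    and cl: "\<forall>a\<in>S. \<forall>b\<in>S. \<forall>c\<in>S. (\<lambda>i. a i - b i + c i) \<in> S"
    unfolding aff1_def by blast
  have "depends_on (ex_vars X S) Y"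
    unfolding depends_on_def
  proof (intro allI impI)
    fix v w :: "'v \<Rightarrow> 'm" assume vw: "\<forall>i\<in>Y. v i = w i"
    have *: "v' \<in> ex_vars X S" if "v \<in> ex_vars X S" "\<forall>i\<in>Y. v i = v' i" for v v'
    proof -
      from that(1) obtain u where u: "u \<in> S" "\<forall>i. i \<notin> X \<longrightarrow> u i = v i"
        unfolding ex_vars_def by blast
      define u' where "u' = (\<lambda>i. if i \<in> X then u i else v' i)"
      have "\<forall>i\<in>Y. u i = u' i" using u(2) that(2) unfolding u'_def by auto
      then have "u' \<in> S" using Y(2) u(1) unfolding depends_on_def by blast
      moreover have "\<forall>i. i \<notin> X \<longrightarrow> u' i = v' i" unfolding u'_def by simp
      ultimately show ?thesis unfolding ex_vars_def mem_Collect_eq by (intro bexI[of _ u'])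
    qed
    show "(v \<in> ex_vars X S) = (w \<in> ex_vars X S)"
      using *[of v w] *[of w v] vw by auto
  qed
  moreover have "\<forall>a\<in>ex_vars X S. \<forall>b\<in>ex_vars X S. \<forall>c\<in>ex_vars X S.
      (\<lambda>i. a i - b i + c i) \<in> ex_vars X S"
  proof (intro ballI)
    fix a b c assume "a \<in> ex_vars X S" "b \<in> ex_vars X S" "c \<in> ex_vars X S"
    then obtain wa wb wc where "wa \<in> S" "wb \<in> S" "wc \<in> S"
      "\<forall>i. i \<notin> X \<longrightarrow> wa i = a i" "\<forall>i. i \<notin> X \<longrightarrow> wb i = b i" "\<forall>i. i \<notin> X \<longrightarrow> wc i = c i"
      unfolding ex_vars_def by blast
    note h = this
    have m1: "(\<lambda>i. wa i - wb i + wc i) \<in> S" using cl h(1-3) by blast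
    have m2: "\<forall>i. i \<notin> X \<longrightarrow> wa i - wb i + wc i = a i - b i + c i" using h(4-6) by simp
    show "(\<lambda>i. a i - b i + c i) \<in> ex_vars X S"
      unfolding ex_vars_def mem_Collect_eq
      by (rule bexI[of _ "\<lambda>i. wa i - wb i + wc i"]) (use m1 m2 in auto)
  qed
  ultimately show ?case using Y(1) unfolding aff1_def by (intro conjI exI[of _ Y]) simp_all
next
  case (theta \<phi> I \<psi> X Y Ups)
  have clphi: "\<forall>a\<in>\<phi>. \<forall>b\<in>\<phi>. \<forall>c\<in>\<phi>. (\<lambda>i. a i - b i + c i) \<in> \<phi>"
    using theta(2) unfolding aff1_def by blast
  have clpsi: "\<And>\<alpha>. \<alpha> \<in> I \<Longrightarrow> \<forall>a\<in>\<psi> \<alpha>. \<forall>b\<in>\<psi> \<alpha>. \<forall>c\<in>\<psi> \<alpha>. (\<lambda>i. a i - b i + c i) \<in> \<psi> \<alpha>"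
    using theta(3) unfolding aff1_def by blast
  have SetEq: "Set_phi_psi \<phi> \<psi> I X v \<subseteq> Set_phi_psi \<phi> \<psi> I X v'"
    if "\<forall>i\<in>Y. v i = v' i" for v v'
  proof
    fix s assume "s \<in> Set_phi_psi \<phi> \<psi> I X v"
    then obtain c where c: "s = set_psi \<psi> I c" "c \<in> \<phi>" "\<forall>i. i \<notin> X \<longrightarrow> c i = v i"
      unfolding Set_phi_psi_def by blast
    define c' where "c' = (\<lambda>i. if i \<in> X then c i else v' i)"
    have agree: "\<forall>i\<in>X \<union> Y. c i = c' i" using c(3) that unfolding c'_def by auto
    then have "c' \<in> \<phi>" using theta(8) c(2) unfolding depends_on_def by blast
    moreover have "set_psi \<psi> I c' = s"
      using c(1) agree theta(9) unfolding set_psi_def depends_on_def by blast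
    moreover have "\<forall>i. i \<notin> X \<longrightarrow> c' i = v' i" unfolding c'_def by simp
    ultimately show "s \<in> Set_phi_psi \<phi> \<psi> I X v'"
      unfolding Set_phi_psi_def by blast
  qed
  have "depends_on (Theta \<phi> \<psi> I X Ups) Y"
  proof -
    have "inter_phi_psi \<phi> \<psi> I X v = inter_phi_psi \<phi> \<psi> I X v'"
      if "\<forall>i\<in>Y. v i = v' i" for v v'
    proof -
      have "Set_phi_psi \<phi> \<psi> I X v = Set_phi_psi \<phi> \<psi> I X v'"
        using SetEq[of v v'] SetEq[of v' v] that by auto
      then show ?thesis unfolding inter_phi_psi_def by simp
    qed
    then show ?thesis unfolding depends_on_def Theta_def by (metis (no_types, lifting) mem_Collect_eq)
  qed
  moreover have "\<forall>a\<in>Theta \<phi> \<psi> I X Ups. \<forall>b\<in>Theta \<phi> \<psi> I X Ups. \<forall>d\<in>Theta \<phi> \<psi> I X Ups.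
      (\<lambda>i. a i - b i + d i) \<in> Theta \<phi> \<psi> I X Ups"
  proof (intro ballI)
    fix a b d assume a: "a \<in> Theta \<phi> \<psi> I X Ups" and b: "b \<in> Theta \<phi> \<psi> I X Ups"
      and d: "d \<in> Theta \<phi> \<psi> I X Ups"
    let ?e = "\<lambda>i. a i - b i + d i"
    show "?e \<in> Theta \<phi> \<psi> I X Ups"
      unfolding Theta_def
    proof (intro CollectI subsetI)
      fix p assume p: "p \<in> Ups"
      obtain w0 w1 where pw: "p = (w0, w1)" by (cases p)
      have ww: "w0 \<subseteq> w1" "w1 \<subseteq> I" using theta(10) p pw by auto
      have wit: "\<exists>c0 c1. c0 \<in> \<phi> \<and> c1 \<in> \<phi> \<and> (\<forall>i. i \<notin> X \<longrightarrow> c0 i = v i) \<and>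
           (\<forall>i. i \<notin> X \<longrightarrow> c1 i = v i) \<and> w1 \<subseteq> set_psi \<psi> I c1 \<and> set_psi \<psi> I c0 \<inter> w1 = w0"
        if "v \<in> Theta \<phi> \<psi> I X Ups" for v
      proof -
        have "(w0, w1) \<in> inter_phi_psi \<phi> \<psi> I X v" using that p pw unfolding Theta_def by auto
        then show ?thesis unfolding inter_phi_psi_def Set_phi_psi_def by blast
      qed
      obtain a0 a1 where A: "a0 \<in> \<phi>" "a1 \<in> \<phi>" "\<forall>i. i \<notin> X \<longrightarrow> a0 i = a i"
        "\<forall>i. i \<notin> X \<longrightarrow> a1 i = a i" "w1 \<subseteq> set_psi \<psi> I a1" "set_psi \<psi> I a0 \<inter> w1 = w0"
        using wit[OF a] by blast
      obtain b0 b1 where B: "b0 \<in> \<phi>" "b1 \<in> \<phi>" "\<forall>i. i \<notin> X \<longrightarrow> b0 i = b i"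
        "\<forall>i. i \<notin> X \<longrightarrow> b1 i = b i" "w1 \<subseteq> set_psi \<psi> I b1" "set_psi \<psi> I b0 \<inter> w1 = w0"
        using wit[OF b] by blast
      obtain d0 d1 where D: "d0 \<in> \<phi>" "d1 \<in> \<phi>" "\<forall>i. i \<notin> X \<longrightarrow> d0 i = d i"
        "\<forall>i. i \<notin> X \<longrightarrow> d1 i = d i" "w1 \<subseteq> set_psi \<psi> I d1" "set_psi \<psi> I d0 \<inter> w1 = w0"
        using wit[OF d] by blast
      define e1 where "e1 = (\<lambda>i. a1 i - b1 i + d1 i)"
      define e0 where "e0 = (\<lambda>i. a0 i - b1 i + d1 i)"
      have e1phi: "e1 \<in> \<phi>" using clphi A B D unfolding e1_def by blast
      have e0phi: "e0 \<in> \<phi>" using clphi A B D unfolding e0_def by blast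
      have e1X: "\<forall>i. i \<notin> X \<longrightarrow> e1 i = ?e i" using A B D unfolding e1_def by auto
      have e0X: "\<forall>i. i \<notin> X \<longrightarrow> e0 i = ?e i" using A B D unfolding e0_def by auto
      have s1: "w1 \<subseteq> set_psi \<psi> I e1"
      proof
        fix \<alpha> assume al: "\<alpha> \<in> w1"
        then have "\<alpha> \<in> I" "a1 \<in> \<psi> \<alpha>" "b1 \<in> \<psi> \<alpha>" "d1 \<in> \<psi> \<alpha>"
          using ww A B D unfolding set_psi_def by auto
        then show "\<alpha> \<in> set_psi \<psi> I e1" using clpsi unfolding set_psi_def e1_def by blast
      qed
      have s0: "set_psi \<psi> I e0 \<inter> w1 = w0"
      proof (intro equalityI subsetI)
        fix \<alpha> assume al: "\<alpha> \<in> set_psi \<psi> I e0 \<inter> w1"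
        then have I: "\<alpha> \<in> I" "e0 \<in> \<psi> \<alpha>" "b1 \<in> \<psi> \<alpha>" "d1 \<in> \<psi> \<alpha>"
          using ww B D unfolding set_psi_def by auto
        have "(\<lambda>i. e0 i - d1 i + b1 i) = a0" unfolding e0_def by (simp add: algebra_simps)
        then have "a0 \<in> \<psi> \<alpha>" using clpsi[OF I(1)] I by metis
        then show "\<alpha> \<in> w0" using A(6) al I(1) unfolding set_psi_def by blast
      next
        fix \<alpha> assume al: "\<alpha> \<in> w0"
        then have "\<alpha> \<in> I" "a0 \<in> \<psi> \<alpha>" "b1 \<in> \<psi> \<alpha>" "d1 \<in> \<psi> \<alpha>" "\<alpha> \<in> w1"
          using ww A B D unfolding set_psi_def by auto
        then show "\<alpha> \<in> set_psi \<psi> I e0 \<inter> w1" using clpsi unfolding set_psi_def e0_def by blast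
      qed
      have "set_psi \<psi> I e1 \<in> Set_phi_psi \<phi> \<psi> I X ?e"
        unfolding Set_phi_psi_def using e1phi e1X by blast
      moreover have "set_psi \<psi> I e0 \<in> Set_phi_psi \<phi> \<psi> I X ?e"
        unfolding Set_phi_psi_def using e0phi e0X by blast
      ultimately show "p \<in> inter_phi_psi \<phi> \<psi> I X ?e"
        unfolding inter_phi_psi_def using pw ww s0 s1 by blast
    qed
  qed
  ultimately show ?case using theta(6) unfolding aff1_def by (intro conjI exI[of _ Y]) simp_all
qed

theorem proposition2p22:
  fixes Th :: "'c set" and sc :: "'r::ring_1 \<Rightarrow> 'm::ab_group_add \<Rightarrow> 'm"
    and S :: "('v \<Rightarrow> 'm) set"
  assumes "left_module sc"
    and "infinite Th"
    and "aff2 Th sc TYPE('k) S"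
  shows "aff1 Th S"
  using main assms by blast

end
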